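(* Let $G$ be a finite group and $\Gamma$ a finite digraph with at least one arc such that $G\leq\mathrm{Aut}(\Gamma)$ acts primitively on the vertex set and transitively on the set of $s$-arcs of $\Gamma$ for some $s\geq 2$. Let $v$ be a vertex of $\Gamma$ and $G_v$ its stabiliser. Then for every prime $p$ dividing $|G_v|$, the group $G_v$ has at least two distinct subgroups of order $p$.
   Context: A digraph $\Gamma=(V,\to)$ consists of a finite vertex set $V$ and an anti-symmetric, irreflexive relation $\to$ on $V$. For $s\geq 0$, an $s$-arc is a sequence $v_0,\dots,v_s$ with $v_i\to v_{i+1}$ for $0\leq i<s$. $G$ is said to act transitively on $s$-arcs ($(G,s)$-arc-transitive) if it is transitive on the set of all $s$-arcs. *)

theory Defs
  imports "HOL-Algebra.Algebra"
begin

definition is_digraph :: "'a set \<Rightarrow> ('a \<Rightarrow> 'a \<Rightarrow> bool) \<Rightarrow> bool" where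
  "is_digraph V arc \<longleftrightarrow> finite V \<and> (\<forall>x y. arc x y \<longrightarrow> x \<in> V \<and> y \<in> V)
     \<and> (\<forall>x. \<not> arc x x) \<and> (\<forall>x y. arc x y \<longrightarrow> \<not> arc y x)"

definition s_arcs :: "'a set \<Rightarrow> ('a \<Rightarrow> 'a \<Rightarrow> bool) \<Rightarrow> nat \<Rightarrow> 'a list set" where
  "s_arcs V arc s = {xs. length xs = Suc s \<and> set xs \<subseteq> V
     \<and> (\<forall>i < s. arc (xs ! i) (xs ! Suc i))}"

definition is_aut :: "'a set \<Rightarrow> ('a \<Rightarrow> 'a \<Rightarrow> bool) \<Rightarrow> ('a \<Rightarrow> 'a) \<Rightarrow> bool" where
  "is_aut V arc g \<longleftrightarrow> g \<in> carrier (BijGroup V)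
     \<and> (\<forall>x\<in>V. \<forall>y\<in>V. arc x y \<longleftrightarrow> arc (g x) (g y))"

definition transitive_on :: "('a \<Rightarrow> 'a) set \<Rightarrow> 'a set \<Rightarrow> bool" where
  "transitive_on G V \<longleftrightarrow> (\<forall>x\<in>V. \<forall>y\<in>V. \<exists>g\<in>G. g x = y)"

definition is_block :: "('a \<Rightarrow> 'a) set \<Rightarrow> 'a set \<Rightarrow> 'a set \<Rightarrow> bool" where
  "is_block G V B \<longleftrightarrow> B \<subseteq> V \<and> (\<forall>g\<in>G. g ` B = B \<or> g ` B \<inter> B = {})"

definition primitive_on :: "('a \<Rightarrow> 'a) set \<Rightarrow> 'a set \<Rightarrow> bool" where
  "primitive_on G V \<longleftrightarrow> transitive_on G V
     \<and> (\<forall>B. is_block G V B \<longrightarrow> card B \<le> 1 \<or> B = V)"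

definition s_arc_transitive :: "('a \<Rightarrow> 'a) set \<Rightarrow> 'a set \<Rightarrow> ('a \<Rightarrow> 'a \<Rightarrow> bool) \<Rightarrow> nat \<Rightarrow> bool" where
  "s_arc_transitive G V arc s \<longleftrightarrow>
     (\<forall>xs\<in>s_arcs V arc s. \<forall>ys\<in>s_arcs V arc s. \<exists>g\<in>G. map g xs = ys)"

definition stabiliser :: "('a \<Rightarrow> 'a) set \<Rightarrow> 'a \<Rightarrow> ('a \<Rightarrow> 'a) set" where
  "stabiliser G v = {g\<in>G. g v = v}"

end

theory Submission
  imports Defs "HOL-Algebra.Sylow" "HOL-Algebra.Group_Action"
begin


lemma carrier_Bij: "carrier (BijGroup V) = Bij V"
  by (simp add: BijGroup_def)

lemma bij_mult_apply:
  "g \<in> Bij V \<Longrightarrow> h \<in> Bij V \<Longrightarrow> x \<in> V \<Longrightarrow> (g \<otimes>\<^bsub>BijGroup V\<^esub> h) x = g (h x)"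
  by (simp add: BijGroup_def compose_def)

lemma bij_one_apply: "x \<in> V \<Longrightarrow> \<one>\<^bsub>BijGroup V\<^esub> x = x"
  by (simp add: BijGroup_def)

lemma bij_in_V: "g \<in> Bij V \<Longrightarrow> x \<in> V \<Longrightarrow> g x \<in> V"
  by (auto simp: Bij_def bij_betw_def)

lemma bij_inv_apply:
  assumes "g \<in> Bij V" "x \<in> V"
  shows "(inv\<^bsub>BijGroup V\<^esub> g) (g x) = x" and "g ((inv\<^bsub>BijGroup V\<^esub> g) x) = x"
proof -
  interpret B: group "BijGroup V" by (rule group_BijGroup)
  have c: "g \<in> carrier (BijGroup V)" using assms by (simp add: carrier_Bij)
  have ic: "inv\<^bsub>BijGroup V\<^esub> g \<in> Bij V" using B.inv_closed[OF c] by (simp add: carrier_Bij)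
  have "(inv\<^bsub>BijGroup V\<^esub> g \<otimes>\<^bsub>BijGroup V\<^esub> g) x = x" using B.l_inv[OF c] assms bij_one_apply by simp
  then show "(inv\<^bsub>BijGroup V\<^esub> g) (g x) = x" using bij_mult_apply[OF ic assms(1) assms(2)] by simp
  have "(g \<otimes>\<^bsub>BijGroup V\<^esub> inv\<^bsub>BijGroup V\<^esub> g) x = x" using B.r_inv[OF c] assms bij_one_apply by simp
  then show "g ((inv\<^bsub>BijGroup V\<^esub> g) x) = x" using bij_mult_apply[OF assms(1) ic assms(2)] by simp
qed

lemma stab_subgroup:
  assumes "subgroup K (BijGroup V)" "Xs \<subseteq> V"
  shows "subgroup {g\<in>K. \<forall>x\<in>Xs. g x = x} (BijGroup V)"
proof -
  interpret B: group "BijGroup V" by (rule group_BijGroup)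
  have KB: "\<And>g. g \<in> K \<Longrightarrow> g \<in> Bij V" using subgroup.subset[OF assms(1)] by (auto simp: carrier_Bij)
  have one: "\<one>\<^bsub>BijGroup V\<^esub> \<in> {g\<in>K. \<forall>x\<in>Xs. g x = x}"
  proof -
    have "\<forall>x\<in>Xs. \<one>\<^bsub>BijGroup V\<^esub> x = x" using assms(2) bij_one_apply[of _ V] by blast
    then show ?thesis using subgroup.one_closed[OF assms(1)] by auto
  qed
  show ?thesis
  proof (rule B.subgroupI)
    show "{g\<in>K. \<forall>x\<in>Xs. g x = x} \<subseteq> carrier (BijGroup V)" using subgroup.subset[OF assms(1)] by auto
    show "{g\<in>K. \<forall>x\<in>Xs. g x = x} \<noteq> {}" using one by blast
  next
    fix g assume g: "g \<in> {g\<in>K. \<forall>x\<in>Xs. g x = x}"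
    show "inv\<^bsub>BijGroup V\<^esub> g \<in> {g\<in>K. \<forall>x\<in>Xs. g x = x}"
    proof -
      have "\<forall>x\<in>Xs. (inv\<^bsub>BijGroup V\<^esub> g) x = x"
      proof
        fix x assume x: "x \<in> Xs"
        have "g \<in> K" "g x = x" using g x by auto
        then show "(inv\<^bsub>BijGroup V\<^esub> g) x = x"
          using bij_inv_apply(1)[OF KB[OF \<open>g \<in> K\<close>], of x] x assms(2) by auto
      qed
      then show ?thesis using g subgroup.m_inv_closed[OF assms(1)] by auto
    qed
  next
    fix g h assume g: "g \<in> {g\<in>K. \<forall>x\<in>Xs. g x = x}" and h: "h \<in> {g\<in>K. \<forall>x\<in>Xs. g x = x}"
    have "\<forall>x\<in>Xs. (g \<otimes>\<^bsub>BijGroup V\<^esub> h) x = x"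
      using g h bij_mult_apply[OF KB KB] assms(2) by auto
    then show "g \<otimes>\<^bsub>BijGroup V\<^esub> h \<in> {g\<in>K. \<forall>x\<in>Xs. g x = x}"
      using g h subgroup.m_closed[OF assms(1)] by auto
  qed
qed

lemma orbit_stab_card:
  assumes "subgroup K (BijGroup V)" "x \<in> V"
  shows "card {g x |g. g \<in> K} * card {g\<in>K. g x = x} = card K"
proof -
  interpret B: group "BijGroup V" by (rule group_BijGroup)
  interpret A: group_action "(BijGroup V)\<lparr>carrier := K\<rparr>" V id
  proof -
    have "group ((BijGroup V)\<lparr>carrier := K\<rparr>)" using B.subgroup_imp_group[OF assms(1)] .
    moreover have "id \<in> hom ((BijGroup V)\<lparr>carrier := K\<rparr>) (BijGroup V)"
      using subgroup.subset[OF assms(1)] by (auto simp: hom_def)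
    ultimately show "group_action ((BijGroup V)\<lparr>carrier := K\<rparr>) V id"
      unfolding group_action_def group_hom_def group_hom_axioms_def using B.group_axioms by auto
  qed
  from A.orbit_stabilizer_theorem[OF assms(2)] show ?thesis
    by (simp add: orbit_def stabilizer_def order_def)
qed

lemma s_arcs_snoc:
  assumes "xs \<in> s_arcs V arc t" "arc (last xs) z" "z \<in> V"
  shows "xs @ [z] \<in> s_arcs V arc (Suc t)"
proof -
  have len: "length xs = Suc t" using assms(1) by (simp add: s_arcs_def)
  have "\<forall>i < Suc t. arc ((xs@[z]) ! i) ((xs@[z]) ! Suc i)"
  proof (intro allI impI)
    fix i assume i: "i < Suc t"
    show "arc ((xs@[z]) ! i) ((xs@[z]) ! Suc i)"
    proof (cases "i < t")
      case True then show ?thesis using assms(1) len i by (simp add: s_arcs_def nth_append)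
    next
      case False then have "i = t" using i by simp
      have ne: "xs \<noteq> []" using len by auto
      have "last xs = xs ! t" using last_conv_nth[OF ne] len by simp
      then show ?thesis using assms(2) len \<open>i = t\<close>
        by (simp add: nth_append)
    qed
  qed
  then show ?thesis using assms len by (simp add: s_arcs_def)
qed

lemma s_arcs_extend:
  assumes "\<forall>u\<in>V. \<exists>z\<in>V. arc u z"
  shows "xs \<in> s_arcs V arc t \<Longrightarrow> \<exists>ys \<in> s_arcs V arc (t+n). take (Suc t) ys = xs"
proof (induction n)
  case 0 then show ?case by (auto simp: s_arcs_def)
next
  case (Suc n)
  then obtain ys where ys: "ys \<in> s_arcs V arc (t+n)" "take (Suc t) ys = xs" by blast
  have len: "length ys = Suc (t+n)" using ys by (simp add: s_arcs_def)
  have "ys \<noteq> []" using len by auto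
  then have "last ys \<in> set ys" by (rule last_in_set)
  then have "last ys \<in> V" using ys(1) by (auto simp: s_arcs_def)
  then obtain z where z: "z \<in> V" "arc (last ys) z" using assms by blast
  have "ys @ [z] \<in> s_arcs V arc (Suc (t+n))" using s_arcs_snoc[OF ys(1) z(2) z(1)] .
  moreover have "take (Suc t) (ys @ [z]) = xs" using ys(2) len by simp
  ultimately have "\<exists>ys\<in>s_arcs V arc (Suc (t+n)). take (Suc t) ys = xs" by blast
  then show ?case by simp
qed

lemma t_arc_trans:
  assumes "s_arc_transitive G V arc s" "\<forall>u\<in>V. \<exists>z\<in>V. arc u z" "t \<le> s"
    "xs \<in> s_arcs V arc t" "ys \<in> s_arcs V arc t"
  shows "\<exists>g\<in>G. map g xs = ys"
proof -
  obtain n where n: "s = t + n" using assms(3) le_Suc_ex by blast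
  obtain xs' where xs': "xs' \<in> s_arcs V arc s" "take (Suc t) xs' = xs"
    using s_arcs_extend[OF assms(2) assms(4), of n] n by blast
  obtain ys' where ys': "ys' \<in> s_arcs V arc s" "take (Suc t) ys' = ys"
    using s_arcs_extend[OF assms(2) assms(5), of n] n by blast
  obtain g where "g \<in> G" "map g xs' = ys'" using assms(1) xs'(1) ys'(1) unfolding s_arc_transitive_def by blast
  then show ?thesis using xs'(2) ys'(2) by (metis take_map)
qed



lemma conj_image: "(a <#\<^bsub>G\<^esub> H) #>\<^bsub>G\<^esub> b = (\<lambda>h. a \<otimes>\<^bsub>G\<^esub> h \<otimes>\<^bsub>G\<^esub> b) ` H"
  by (auto simp: l_coset_def r_coset_def)

lemma finite_Bij: "finite V \<Longrightarrow> finite (Bij V)"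
proof -
  assume f: "finite V"
  have "Bij V \<subseteq> V \<rightarrow>\<^sub>E V" by (auto simp: Bij_def bij_betw_def extensional_def)
  moreover have "finite (V \<rightarrow>\<^sub>E V)" using f by (simp add: finite_PiE)
  ultimately show ?thesis by (rule finite_subset)
qed

theorem corollary2p8:
  fixes V :: "'a set" and arc :: "'a \<Rightarrow> 'a \<Rightarrow> bool" and G :: "('a \<Rightarrow> 'a) set"
    and s :: nat and v :: 'a and p :: nat
  assumes "is_digraph V arc"
    and "\<exists>x y. arc x y"
    and "subgroup G (BijGroup V)"
    and "\<forall>g\<in>G. is_aut V arc g"
    and "primitive_on G V"
    and "s \<ge> 2"
    and "s_arc_transitive G V arc s"
    and "v \<in> V"
    and "Factorial_Ring.prime p"
    and "p dvd card (stabiliser G v)"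
  shows "\<exists>H1 H2. H1 \<noteq> H2
    \<and> subgroup H1 ((BijGroup V)\<lparr>carrier := stabiliser G v\<rparr>) \<and> card H1 = p
    \<and> subgroup H2 ((BijGroup V)\<lparr>carrier := stabiliser G v\<rparr>) \<and> card H2 = p"
proof (rule ccontr)
  assume contra: "\<not> ?thesis"
  interpret B: group "BijGroup V" by (rule group_BijGroup)
  have finV: "finite V" and arcV: "\<And>x y. arc x y \<Longrightarrow> x \<in> V \<and> y \<in> V" and irr: "\<And>x. \<not> arc x x"
    using assms(1) by (auto simp: is_digraph_def)
  have GB: "\<And>g. g \<in> G \<Longrightarrow> g \<in> Bij V" using subgroup.subset[OF assms(3)] by (auto simp: carrier_Bij)
  have aut: "\<And>g x y. g \<in> G \<Longrightarrow> x \<in> V \<Longrightarrow> y \<in> V \<Longrightarrow> arc x y \<longleftrightarrow> arc (g x) (g y)"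
    using assms(4) by (auto simp: is_aut_def)
  have trans: "\<And>x y. x \<in> V \<Longrightarrow> y \<in> V \<Longrightarrow> \<exists>g\<in>G. g x = y"
    using assms(5) by (auto simp: primitive_on_def transitive_on_def)
  have out: "\<forall>u\<in>V. \<exists>z\<in>V. arc u z"
  proof
    fix u assume u: "u \<in> V"
    obtain a b where ab: "arc a b" using assms(2) by blast
    then have abV: "a \<in> V" "b \<in> V" using arcV by auto
    obtain g where g: "g \<in> G" "g a = u" using trans[OF abV(1) u] by blast
    have "arc u (g b)" using aut[OF g(1) abV] ab g(2) by simp
    then show "\<exists>z\<in>V. arc u z" using arcV by blast
  qed
  obtain w where vw: "arc v w" "w \<in> V" using out assms(8) by blast
  obtain x where wx: "arc w x" "x \<in> V" using out vw(2) by blast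
  have vnw: "v \<noteq> w" using vw irr by auto
  define Gv where "Gv = {g\<in>G. \<forall>y\<in>{v}. g y = y}"
  define Gvw where "Gvw = {g\<in>Gv. \<forall>y\<in>{w}. g y = y}"
  define Gvwx where "Gvwx = {g\<in>Gvw. \<forall>y\<in>{x}. g y = y}"
  have sGv: "subgroup Gv (BijGroup V)" unfolding Gv_def
    using stab_subgroup[OF assms(3), of "{v}"] assms(8) by simp
  have sGvw: "subgroup Gvw (BijGroup V)" unfolding Gvw_def
    using stab_subgroup[OF sGv, of "{w}"] vw(2) by simp
  have sGvwx: "subgroup Gvwx (BijGroup V)" unfolding Gvwx_def
    using stab_subgroup[OF sGvw, of "{x}"] wx(2) by simp
  have Gv_eq: "stabiliser G v = Gv" by (auto simp: stabiliser_def Gv_def)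
  have GvG: "Gv \<subseteq> G" by (auto simp: Gv_def)
  have GvwGv: "Gvw \<subseteq> Gv" by (auto simp: Gvw_def)
  have finBij: "finite (Bij V)" using finite_Bij[OF finV] .
  have finGvw: "finite Gvw" using subgroup.subset[OF sGvw] finBij by (auto simp: carrier_Bij intro: finite_subset)
  have orb1: "{g w |g. g \<in> Gv} = {u. arc v u}"
  proof (intro equalityI subsetI)
    fix u assume "u \<in> {g w |g. g \<in> Gv}"
    then obtain g where g: "g \<in> Gv" "u = g w" by blast
    then have gG: "g \<in> G" "g v = v" by (auto simp: Gv_def)
    have "arc (g v) (g w)" using aut[OF gG(1) assms(8) vw(2)] vw(1) by blast
    then show "u \<in> {u. arc v u}" using gG g by auto
  next
    fix u assume "u \<in> {u. arc v u}"
    then have u: "arc v u" by simp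
    have "[v,w] \<in> s_arcs V arc 1" "[v,u] \<in> s_arcs V arc 1"
      using vw u arcV assms(8) by (auto simp: s_arcs_def)
    then obtain g where "g \<in> G" "map g [v,w] = [v,u]"
      using t_arc_trans[OF assms(7) out, of 1] assms(6) by force
    then show "u \<in> {g w |g. g \<in> Gv}" by (auto simp: Gv_def)
  qed
  have orb2: "{g x |g. g \<in> Gvw} = {u. arc w u}"
  proof (intro equalityI subsetI)
    fix u assume "u \<in> {g x |g. g \<in> Gvw}"
    then obtain g where g: "g \<in> Gvw" "u = g x" by blast
    then have gG: "g \<in> G" "g w = w" by (auto simp: Gvw_def Gv_def)
    have "arc (g w) (g x)" using aut[OF gG(1) vw(2) wx(2)] wx(1) by blast
    then show "u \<in> {u. arc w u}" using gG g by auto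
  next
    fix u assume "u \<in> {u. arc w u}"
    then have u: "arc w u" by simp
    have "[v,w,x] \<in> s_arcs V arc 2" "[v,w,u] \<in> s_arcs V arc 2"
      using vw wx u arcV assms(8) by (auto simp: s_arcs_def numeral_2_eq_2 less_Suc_eq)
    then obtain g where "g \<in> G" "map g [v,w,x] = [v,w,u]"
      using t_arc_trans[OF assms(7) out, of 2] assms(6) by force
    then show "u \<in> {g x |g. g \<in> Gvw}" by (auto simp: Gvw_def Gv_def)
  qed
  have stab1: "{g\<in>Gv. g w = w} = Gvw" by (auto simp: Gvw_def)
  have stab2: "{g\<in>Gvw. g x = x} = Gvwx" by (auto simp: Gvwx_def)
  have c1: "card {u. arc v u} * card Gvw = card Gv"
    using orbit_stab_card[OF sGv vw(2)] orb1 stab1 by simp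
  have c2: "card {u. arc w u} * card Gvwx = card Gvw"
    using orbit_stab_card[OF sGvw wx(2)] orb2 stab2 by simp
  have keq: "card {u. arc w u} = card {u. arc v u}"
  proof -
    obtain h where h: "h \<in> G" "h v = w" using trans[OF assms(8) vw(2)] by blast
    have hB: "h \<in> Bij V" using GB h(1) .
    have inj: "inj_on h {u. arc v u}" using hB arcV
      by (auto simp: Bij_def bij_betw_def inj_on_def)
    have "h ` {u. arc v u} = {u. arc w u}"
    proof (intro equalityI subsetI)
      fix y assume "y \<in> h ` {u. arc v u}"
      then obtain u where "arc v u" "y = h u" by blast
      then show "y \<in> {u. arc w u}" using aut[OF h(1) assms(8)] arcV h(2) by auto
    next
      fix y assume "y \<in> {u. arc w u}"
      then have y: "arc w y" "y \<in> V" using arcV by auto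
      have "y \<in> h ` V" using hB y(2) by (auto simp: Bij_def bij_betw_def)
      then obtain u where u: "u \<in> V" "y = h u" by blast
      then have "arc v u" using aut[OF h(1) assms(8) u(1)] y h(2) by simp
      then show "y \<in> h ` {u. arc v u}" using u by blast
    qed
    then show ?thesis using card_image[OF inj] by simp
  qed
  have pGvw: "p dvd card Gvw"
  proof -
    have "p dvd card {u. arc v u} * card Gvw" using assms(10) Gv_eq c1 by simp
    then have "p dvd card {u. arc v u} \<or> p dvd card Gvw" using assms(9) prime_dvd_mult_iff by blast
    then show ?thesis
    proof
      assume "p dvd card {u. arc v u}"
      then have "p dvd card {u. arc w u} * card Gvwx" using keq by simp
      then show ?thesis using c2 by simp
    qed
  qed

  obtain m where m: "card Gvw = p * m" using pGvw by (auto elim: dvdE)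
  have grpGvw: "group ((BijGroup V)\<lparr>carrier := Gvw\<rparr>)" using B.subgroup_imp_group[OF sGvw] .
  obtain P where P: "subgroup P ((BijGroup V)\<lparr>carrier := Gvw\<rparr>)" "card P = p ^ 1"
    using sylow_thm[OF assms(9) grpGvw, of 1 m] m finGvw by (auto simp: order_def)
  have sP: "subgroup P (BijGroup V)" using B.incl_subgroup[OF sGvw P(1)] .
  have cP: "card P = p" using P(2) by simp
  have PGvw: "P \<subseteq> Gvw" using subgroup.subset[OF P(1)] by simp
  have PGv: "P \<subseteq> Gv" using PGvw GvwGv by blast
  have PG: "P \<subseteq> G" using PGv GvG by blast
  have uniq: "\<And>H. subgroup H (BijGroup V) \<Longrightarrow> H \<subseteq> Gv \<Longrightarrow> card H = p \<Longrightarrow> H = P"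
  proof -
    fix H assume H: "subgroup H (BijGroup V)" "H \<subseteq> Gv" "card H = p"
    show "H = P"
    proof (rule ccontr)
      assume ne: "H \<noteq> P"
      have "subgroup H ((BijGroup V)\<lparr>carrier := stabiliser G v\<rparr>)"
        using B.subgroup_incl[OF H(1) sGv H(2)] Gv_eq by simp
      moreover have "subgroup P ((BijGroup V)\<lparr>carrier := stabiliser G v\<rparr>)"
        using B.subgroup_incl[OF sP sGv PGv] Gv_eq by simp
      ultimately show False using contra ne H(3) cP by blast
    qed
  qed
  have Gcar: "\<And>k. k \<in> G \<Longrightarrow> k \<in> carrier (BijGroup V)" using subgroup.subset[OF assms(3)] by blast
  have Pcar: "P \<subseteq> carrier (BijGroup V)" using subgroup.subset[OF sP] .
  have conjB: "\<And>k. k \<in> G \<Longrightarrow> (\<lambda>h. k \<otimes>\<^bsub>BijGroup V\<^esub> h \<otimes>\<^bsub>BijGroup V\<^esub> inv\<^bsub>BijGroup V\<^esub> k) ` P \<subseteq> Gv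
     \<Longrightarrow> (\<lambda>h. k \<otimes>\<^bsub>BijGroup V\<^esub> h \<otimes>\<^bsub>BijGroup V\<^esub> inv\<^bsub>BijGroup V\<^esub> k) ` P = P"
  proof -
    fix k assume k: "k \<in> G"
      and sub: "(\<lambda>h. k \<otimes>\<^bsub>BijGroup V\<^esub> h \<otimes>\<^bsub>BijGroup V\<^esub> inv\<^bsub>BijGroup V\<^esub> k) ` P \<subseteq> Gv"
    have kc: "k \<in> carrier (BijGroup V)" using Gcar k .
    have ikc: "inv\<^bsub>BijGroup V\<^esub> k \<in> carrier (BijGroup V)" using B.inv_closed[OF kc] .
    have "subgroup (inv\<^bsub>BijGroup V\<^esub> (inv\<^bsub>BijGroup V\<^esub> k) <#\<^bsub>BijGroup V\<^esub> P #>\<^bsub>BijGroup V\<^esub> inv\<^bsub>BijGroup V\<^esub> k) (BijGroup V)"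
      using B.subgroup_conjugation_is_surj1[OF ikc sP] .
    then have sc: "subgroup ((\<lambda>h. k \<otimes>\<^bsub>BijGroup V\<^esub> h \<otimes>\<^bsub>BijGroup V\<^esub> inv\<^bsub>BijGroup V\<^esub> k) ` P) (BijGroup V)"
      by (simp add: B.inv_inv[OF kc] conj_image)
    have "inj_on (\<lambda>h. k \<otimes>\<^bsub>BijGroup V\<^esub> h \<otimes>\<^bsub>BijGroup V\<^esub> inv\<^bsub>BijGroup V\<^esub> k) P"
      unfolding inj_on_def using B.conjugation_is_inj[OF kc] Pcar by blast
    then have "card ((\<lambda>h. k \<otimes>\<^bsub>BijGroup V\<^esub> h \<otimes>\<^bsub>BijGroup V\<^esub> inv\<^bsub>BijGroup V\<^esub> k) ` P) = p"
      using card_image cP by metis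
    then show "(\<lambda>h. k \<otimes>\<^bsub>BijGroup V\<^esub> h \<otimes>\<^bsub>BijGroup V\<^esub> inv\<^bsub>BijGroup V\<^esub> k) ` P = P"
      using uniq sc sub by blast
  qed
  interpret Gr: group "(BijGroup V)\<lparr>carrier := G\<rparr>" using B.subgroup_imp_group[OF assms(3)] .
  define N where "N = normalizer ((BijGroup V)\<lparr>carrier := G\<rparr>) P"
  have sN: "subgroup N ((BijGroup V)\<lparr>carrier := G\<rparr>)" unfolding N_def
    using Gr.normalizer_imp_subgroup PG by simp
  have invc: "\<And>n. n \<in> G \<Longrightarrow> inv\<^bsub>(BijGroup V)\<lparr>carrier := G\<rparr>\<^esub> n = inv\<^bsub>BijGroup V\<^esub> n"
    using B.m_inv_consistent[OF assms(3)] by simp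
  have Nmem: "\<And>n. n \<in> N \<longleftrightarrow> n \<in> G \<and> (\<lambda>h. n \<otimes>\<^bsub>BijGroup V\<^esub> h \<otimes>\<^bsub>BijGroup V\<^esub> inv\<^bsub>BijGroup V\<^esub> n) ` P = P"
  proof -
    fix n
    show "n \<in> N \<longleftrightarrow> n \<in> G \<and> (\<lambda>h. n \<otimes>\<^bsub>BijGroup V\<^esub> h \<otimes>\<^bsub>BijGroup V\<^esub> inv\<^bsub>BijGroup V\<^esub> n) ` P = P"
    proof (cases "n \<in> G")
      case True
      then show ?thesis unfolding N_def normalizer_def stabilizer_def using PG invc[OF True]
        by (simp add: conj_image)
    next
      case False
      then show ?thesis unfolding N_def normalizer_def stabilizer_def by simp
    qed
  qed

  have Nsub: "N \<subseteq> G" using Nmem by blast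
  have Nmult: "\<And>a b. a \<in> N \<Longrightarrow> b \<in> N \<Longrightarrow> a \<otimes>\<^bsub>BijGroup V\<^esub> b \<in> N"
    using subgroup.m_closed[OF sN] by simp
  have Ninv: "\<And>a. a \<in> N \<Longrightarrow> inv\<^bsub>BijGroup V\<^esub> a \<in> N"
  proof -
    fix a assume a: "a \<in> N"
    then have "inv\<^bsub>(BijGroup V)\<lparr>carrier := G\<rparr>\<^esub> a \<in> N" using subgroup.m_inv_closed[OF sN] by blast
    then show "inv\<^bsub>BijGroup V\<^esub> a \<in> N" using invc a Nsub by auto
  qed
  have None: "\<one>\<^bsub>BijGroup V\<^esub> \<in> N" using subgroup.one_closed[OF sN] by simp
  have GvN: "Gv \<subseteq> N"
  proof
    fix h assume h: "h \<in> Gv"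
    have hG: "h \<in> G" using h GvG by blast
    have "(\<lambda>y. h \<otimes>\<^bsub>BijGroup V\<^esub> y \<otimes>\<^bsub>BijGroup V\<^esub> inv\<^bsub>BijGroup V\<^esub> h) ` P \<subseteq> Gv"
      using h PGv subgroup.m_closed[OF sGv] subgroup.m_inv_closed[OF sGv] by blast
    then show "h \<in> N" using conjB[OF hG] Nmem hG by blast
  qed
  obtain g where g: "g \<in> G" "g v = w" using trans[OF assms(8) vw(2)] by blast
  have gc: "g \<in> carrier (BijGroup V)" using Gcar g(1) .
  define ig where "ig = inv\<^bsub>BijGroup V\<^esub> g"
  have igG: "ig \<in> G" unfolding ig_def using subgroup.m_inv_closed[OF assms(3) g(1)] .
  have iig: "inv\<^bsub>BijGroup V\<^esub> ig = g" unfolding ig_def using B.inv_inv[OF gc] .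
  have igN: "ig \<in> N"
  proof -
    have "(\<lambda>y. ig \<otimes>\<^bsub>BijGroup V\<^esub> y \<otimes>\<^bsub>BijGroup V\<^esub> inv\<^bsub>BijGroup V\<^esub> ig) ` P \<subseteq> Gv"
    proof
      fix z assume "z \<in> (\<lambda>y. ig \<otimes>\<^bsub>BijGroup V\<^esub> y \<otimes>\<^bsub>BijGroup V\<^esub> inv\<^bsub>BijGroup V\<^esub> ig) ` P"
      then obtain y where y: "y \<in> P" "z = ig \<otimes>\<^bsub>BijGroup V\<^esub> y \<otimes>\<^bsub>BijGroup V\<^esub> g" using iig by blast
      have yG: "y \<in> G" using y(1) PG by blast
      have yw: "y w = w" using y(1) PGvw by (auto simp: Gvw_def)
      have zG: "z \<in> G" using y(2) yG igG g(1) subgroup.m_closed[OF assms(3)] by blast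
      have igB: "ig \<in> Bij V" using GB igG .
      have yB: "y \<in> Bij V" using GB yG .
      have gB: "g \<in> Bij V" using GB g(1) .
      have iyB: "ig \<otimes>\<^bsub>BijGroup V\<^esub> y \<in> Bij V"
        using B.m_closed[of ig y] igB yB by (simp add: carrier_Bij)
      have "z v = ig (y (g v))"
        using y(2) bij_mult_apply[OF iyB gB assms(8)] bij_mult_apply[OF igB yB] bij_in_V[OF gB assms(8)] by simp
      also have "\<dots> = v" using g(2) yw bij_inv_apply(1)[OF gB assms(8)] unfolding ig_def by simp
      finally show "z \<in> Gv" using zG by (simp add: Gv_def)
    qed
    then show ?thesis using conjB[OF igG] Nmem igG by blast
  qed
  have gN: "g \<in> N" using Ninv[OF igN] iig by simp
  define B0 where "B0 = (\<lambda>n. n v) ` N"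
  have B0V: "B0 \<subseteq> V" using Nsub GB bij_in_V[of _ V v] assms(8) by (auto simp: B0_def)
  have blk: "is_block G V B0"
    unfolding is_block_def
  proof (intro conjI ballI)
    show "B0 \<subseteq> V" using B0V .
    fix h assume h: "h \<in> G"
    show "h ` B0 = B0 \<or> h ` B0 \<inter> B0 = {}"
    proof (cases "h ` B0 \<inter> B0 = {}")
      case True thus ?thesis by simp
    next
      case False
      then obtain n1 n2 where n: "n1 \<in> N" "n2 \<in> N" "h (n1 v) = n2 v" by (auto simp: B0_def)
      have n1G: "n1 \<in> G" and n2G: "n2 \<in> G" using n Nsub by auto
      have hc: "h \<in> carrier (BijGroup V)" and n1c: "n1 \<in> carrier (BijGroup V)" and n2c: "n2 \<in> carrier (BijGroup V)"
        using Gcar h n1G n2G by auto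
      define k where "k = inv\<^bsub>BijGroup V\<^esub> n2 \<otimes>\<^bsub>BijGroup V\<^esub> h \<otimes>\<^bsub>BijGroup V\<^esub> n1"
      have kG: "k \<in> G" unfolding k_def
        using subgroup.m_closed[OF assms(3)] subgroup.m_inv_closed[OF assms(3)] h n1G n2G by blast
      have n1B: "n1 \<in> Bij V" and n2B: "n2 \<in> Bij V" and hB: "h \<in> Bij V" using GB n1G n2G h by auto
      have in2B: "inv\<^bsub>BijGroup V\<^esub> n2 \<in> Bij V" using B.inv_closed[OF n2c] by (simp add: carrier_Bij)
      have i2hB: "inv\<^bsub>BijGroup V\<^esub> n2 \<otimes>\<^bsub>BijGroup V\<^esub> h \<in> Bij V"
        using B.m_closed[OF B.inv_closed[OF n2c] hc] by (simp add: carrier_Bij)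
      have n1v: "n1 v \<in> V" using bij_in_V[OF n1B assms(8)] .
      have "k v = (inv\<^bsub>BijGroup V\<^esub> n2) (h (n1 v))"
        unfolding k_def using bij_mult_apply[OF i2hB n1B assms(8)] bij_mult_apply[OF in2B hB n1v] by simp
      also have "\<dots> = v" using n(3) bij_inv_apply(1)[OF n2B assms(8)] by simp
      finally have "k \<in> Gv" using kG by (simp add: Gv_def)
      then have kN: "k \<in> N" using GvN by blast
      have "h = n2 \<otimes>\<^bsub>BijGroup V\<^esub> k \<otimes>\<^bsub>BijGroup V\<^esub> inv\<^bsub>BijGroup V\<^esub> n1"
        unfolding k_def using hc n1c n2c
        by (simp flip: B.m_assoc) (simp add: B.m_assoc)
      then have hN: "h \<in> N" using Nmult Ninv kN n by metis
      have "h ` B0 = B0"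
      proof (intro equalityI subsetI)
        fix y assume "y \<in> h ` B0"
        then obtain n where nn: "n \<in> N" "y = h (n v)" by (auto simp: B0_def)
        have "y = (h \<otimes>\<^bsub>BijGroup V\<^esub> n) v"
          using nn bij_mult_apply[OF hB _ assms(8)] GB Nsub by auto
        then show "y \<in> B0" using Nmult[OF hN nn(1)] by (auto simp: B0_def)
      next
        fix y assume "y \<in> B0"
        then obtain n where nn: "n \<in> N" "y = n v" by (auto simp: B0_def)
        have nc: "n \<in> carrier (BijGroup V)" using Gcar nn(1) Nsub by auto
        have ihB: "inv\<^bsub>BijGroup V\<^esub> h \<otimes>\<^bsub>BijGroup V\<^esub> n \<in> Bij V"
          using B.m_closed[OF B.inv_closed[OF hc] nc] by (simp add: carrier_Bij)
        have e: "h \<otimes>\<^bsub>BijGroup V\<^esub> (inv\<^bsub>BijGroup V\<^esub> h \<otimes>\<^bsub>BijGroup V\<^esub> n) = n"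
          using hc nc by (simp flip: B.m_assoc)
        have "y = h ((inv\<^bsub>BijGroup V\<^esub> h \<otimes>\<^bsub>BijGroup V\<^esub> n) v)"
          using bij_mult_apply[OF hB ihB assms(8)] e nn(2) by simp
        moreover have "inv\<^bsub>BijGroup V\<^esub> h \<otimes>\<^bsub>BijGroup V\<^esub> n \<in> N" using Nmult[OF Ninv[OF hN] nn(1)] .
        ultimately show "y \<in> h ` B0" by (auto simp: B0_def)
      qed
      then show ?thesis by simp
    qed
  qed
  have vB0: "v \<in> B0" using image_eqI[of v "\<lambda>n. n v" "\<one>\<^bsub>BijGroup V\<^esub>" N] None bij_one_apply[OF assms(8)] unfolding B0_def by simp
  have wB0: "w \<in> B0" using image_eqI[of w "\<lambda>n. n v" g N] gN g(2) unfolding B0_def by simp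
  have finB0: "finite B0" using B0V finV finite_subset by blast
  have "card B0 \<le> 1 \<or> B0 = V" using assms(5) blk by (auto simp: primitive_on_def)
  moreover have "\<not> card B0 \<le> 1" using card_le_Suc0_iff_eq[OF finB0] vB0 wB0 vnw by auto
  ultimately have B0eq: "B0 = V" by blast
  have fixall: "\<And>y u. y \<in> P \<Longrightarrow> u \<in> V \<Longrightarrow> y u = u"
  proof -
    fix y u assume y: "y \<in> P" and u: "u \<in> V"
    then obtain n where n: "n \<in> N" "u = n v" using B0eq by (auto simp: B0_def)
    have nc: "n \<in> carrier (BijGroup V)" using Gcar n(1) Nsub by auto
    have inN: "inv\<^bsub>BijGroup V\<^esub> n \<in> N" using Ninv[OF n(1)] .
    then have "(\<lambda>h. inv\<^bsub>BijGroup V\<^esub> n \<otimes>\<^bsub>BijGroup V\<^esub> h \<otimes>\<^bsub>BijGroup V\<^esub> inv\<^bsub>BijGroup V\<^esub> (inv\<^bsub>BijGroup V\<^esub> n)) ` P = P"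
      using Nmem by blast
    then have "inv\<^bsub>BijGroup V\<^esub> n \<otimes>\<^bsub>BijGroup V\<^esub> y \<otimes>\<^bsub>BijGroup V\<^esub> n \<in> P"
      using y B.inv_inv[OF nc] by force
    then have fx: "(inv\<^bsub>BijGroup V\<^esub> n \<otimes>\<^bsub>BijGroup V\<^esub> y \<otimes>\<^bsub>BijGroup V\<^esub> n) v = v"
      using PGv by (auto simp: Gv_def)
    have nB: "n \<in> Bij V" using GB n(1) Nsub by auto
    have yB: "y \<in> Bij V" using GB y PG by auto
    have yc: "y \<in> carrier (BijGroup V)" using yB by (simp add: carrier_Bij)
    have inB: "inv\<^bsub>BijGroup V\<^esub> n \<in> Bij V" using B.inv_closed[OF nc] by (simp add: carrier_Bij)
    have iyB: "inv\<^bsub>BijGroup V\<^esub> n \<otimes>\<^bsub>BijGroup V\<^esub> y \<in> Bij V"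
      using B.m_closed[OF B.inv_closed[OF nc] yc] by (simp add: carrier_Bij)
    have nv: "n v \<in> V" using bij_in_V[OF nB assms(8)] .
    have ynv: "y (n v) \<in> V" using bij_in_V[OF yB nv] .
    have "(inv\<^bsub>BijGroup V\<^esub> n) (y (n v)) = v"
      using fx bij_mult_apply[OF iyB nB assms(8)] bij_mult_apply[OF inB yB nv] by simp
    then have "n ((inv\<^bsub>BijGroup V\<^esub> n) (y (n v))) = n v" by simp
    then have "y (n v) = n v" using bij_inv_apply(2)[OF nB ynv] by simp
    then show "y u = u" using n(2) by simp
  qed
  have "P \<subseteq> {\<one>\<^bsub>BijGroup V\<^esub>}"
  proof
    fix y assume y: "y \<in> P"
    have yB: "y \<in> Bij V" using GB y PG by auto
    have "y = \<one>\<^bsub>BijGroup V\<^esub>"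
    proof
      fix u show "y u = \<one>\<^bsub>BijGroup V\<^esub> u"
      proof (cases "u \<in> V")
        case True then show ?thesis using fixall[OF y True] bij_one_apply[OF True] by simp
      next
        case False then show ?thesis using yB by (simp add: Bij_def extensional_def BijGroup_def)
      qed
    qed
    then show "y \<in> {\<one>\<^bsub>BijGroup V\<^esub>}" by simp
  qed
  then have "card P \<le> 1" by (metis card.empty card.insert card_mono empty_iff finite.emptyI finite.insertI le_zero_eq One_nat_def)
  moreover have "p > 1" using assms(9) prime_gt_1_nat by blast
  ultimately show False using cP by simp
qed
end
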